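(* Consider the setting in the context. Let $\mathcal F=\{i_0,\dots,i_{\bar h-1}\}\subseteq[\bar n]$ be $\bar h$ distinct racks, $p\in[\bar h]$, and let $\widetilde{\mathbf{C}}$ be any codeword. (1) Let $b\in[1,u-v]$ and $\mathcal R\subseteq[\bar n]\setminus\mathcal F$ with $|\mathcal R|=\bar d$. For every $a\in[\bar s^{\bar n}]$ and $m\in[b]$, the quantities $\sum_{g=0}^{u-1}\theta^{gm}c^{(p+x)}_{i_pu+g,a}$ for $x\in[\bar s]$, and $H_{i_p,i}(a,m)$ for $i\in\mathcal F\setminus\{i_p\}$, are determined by (are linear functions of) the values $\{H_{i_p,j}(a',m): j\in\mathcal R,\ a'\in[\bar s^{\bar n}],\ m\in[b]\}$. (2) Let $b\in[u-v+1,u]$ and $\mathcal R'\subseteq[\bar n]\setminus\mathcal F$ with $|\mathcal R'|=\bar d+1$. For every $a\in[\bar s^{\bar n}]$ and $m\in[u-v,b)$, the quantities $\sum_{g=0}^{u-1}\theta^{gm}c^{(p+x)}_{i_pu+g,a}$ for $x\in[\bar s]$, and $H_{i_p,i}(a,m)$ for $i\in\mathcal F\setminus\{i_p\}$, are determined by (are linear functions of) the values $\{H_{i_p,j}(a',m): j\in\mathcal R',\ a'\in[\bar s^{\bar n}],\ m\in[u-v,b)\}$.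
   Context: $[N]=\{0,\dots,N-1\}$. Integers: $\bar n,u\ge2$ (with $u>1$), $\bar k$, $0\le v<u$, $n=\bar nu$, $k=\bar ku+v$, $r=n-k$, $\bar r=\bar n-\bar k$ (so $r=\bar ru-v$); $\bar d,\bar h,\delta$ with $\delta\in[1,\bar h)$ and $\bar k\le\bar d\le\bar n-\bar h$; $\bar s=\bar d-\bar k+1$. $\mathbb{F}$ is a finite field with $|\mathbb{F}|\ge n\bar s+1$ containing an element $\theta$ of multiplicative order $u$; $\xi$ is a primitive element of $\mathbb{F}$ and $\lambda_{i,j}=\xi^{i\bar s+j}$ for $i\in[\bar n]$, $j\in[\bar s]$. For $a\in[\bar s^{\bar n}]$ write $a=\sum_{i}a_i\bar s^i$ with $a_i\in[\bar s]$, and let $a(i,j)$ denote the integer whose $\bar s$-ary digits equal those of $a$ except the $i$-th digit is $j$. The code $\widetilde{\mathbf{C}}$ consists of all arrays $(c^{(y)}_{iu+g,a})$ over $\mathbb{F}$, indexed by $i\in[\bar n]$, $g\in[u]$, $a\in[\bar s^{\bar n}]$, $y\in[\bar s+\bar h-\delta]$ (node $iu+g$ stores $(c^{(y)}_{iu+g,a})_{y,a}$, a vector of length $(\bar s+\bar h-\delta)\bar s^{\bar n}$), satisfying $\sum_{i=0}^{\bar n-1}\sum_{g=0}^{u-1}\theta^{gt}\lambda_{i,a_i}^t c^{(y)}_{iu+g,a}=0$ for all $t\in[r]$, $a\in[\bar s^{\bar n}]$, $y\in[\bar s+\bar h-\delta]$. For $p\in[\bar h]$, rack $j\in[\bar n]\setminus\{i_p\}$,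 $a\in[\bar s^{\bar n}]$ and integer $m$, define $H_{i_p,j}(a,m)=\sum_{x=0}^{\bar s-1}\sum_{g=0}^{u-1}\theta^{gm}c^{(p+x)}_{ju+g,\,a(i_p,\,a_{i_p}\oplus x)}$, where superscripts are taken modulo $\bar s+\bar h-\delta$ and $\oplus$ is addition modulo $\bar s$. *)

theory Defs
  imports Main
begin

definition has_mult_order :: "'a::field \<Rightarrow> nat \<Rightarrow> bool" where
  "has_mult_order \<theta> u \<longleftrightarrow> 0 < u \<and> \<theta> ^ u = 1 \<and> (\<forall>k. 0 < k \<and> k < u \<longrightarrow> \<theta> ^ k \<noteq> 1)"

definition primitive_elem :: "'a::field \<Rightarrow> bool" where
  "primitive_elem \<xi> \<longleftrightarrow> (\<forall>x. x \<noteq> 0 \<longrightarrow> (\<exists>k::nat. x = \<xi> ^ k))"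

definition digit :: "nat \<Rightarrow> nat \<Rightarrow> nat \<Rightarrow> nat" where
  "digit s a i = (a div s ^ i) mod s"

definition setdig :: "nat \<Rightarrow> nat \<Rightarrow> nat \<Rightarrow> nat \<Rightarrow> nat" where
  "setdig s a i j = a - digit s a i * s ^ i + j * s ^ i"

definition lam :: "'a::field \<Rightarrow> nat \<Rightarrow> nat \<Rightarrow> nat \<Rightarrow> 'a" where
  "lam \<xi> s i j = \<xi> ^ (i * s + j)"

text \<open>Codeword condition. c y node a = c^{(y)}_{node,a}; L = s + h - delta.\<close>
definition is_codeword :: "'a::field \<Rightarrow> 'a \<Rightarrow> nat \<Rightarrow> nat \<Rightarrow> nat \<Rightarrow> nat \<Rightarrow> nat
    \<Rightarrow> (nat \<Rightarrow> nat \<Rightarrow> nat \<Rightarrow> 'a) \<Rightarrow> bool" where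
  "is_codeword \<theta> \<xi> nb u s r L c \<longleftrightarrow>
     (\<forall>t<r. \<forall>a<s ^ nb. \<forall>y<L.
        (\<Sum>i<nb. \<Sum>g<u. \<theta> ^ (g * t) * (lam \<xi> s i (digit s a i)) ^ t * c y (i * u + g) a) = 0)"

text \<open>H_{i_p,j}(a,m) (superscripts mod L, digit addition mod s).\<close>
definition Hval :: "'a::field \<Rightarrow> nat \<Rightarrow> nat \<Rightarrow> nat \<Rightarrow> (nat \<Rightarrow> nat \<Rightarrow> nat \<Rightarrow> 'a)
    \<Rightarrow> nat \<Rightarrow> nat \<Rightarrow> nat \<Rightarrow> nat \<Rightarrow> nat \<Rightarrow> 'a" where
  "Hval \<theta> u s L c p ip j a m =
     (\<Sum>x<s. \<Sum>g<u. \<theta> ^ (g * m) *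
        c ((p + x) mod L) (j * u + g) (setdig s a ip ((digit s a ip + x) mod s)))"

definition Nodeval :: "'a::field \<Rightarrow> nat \<Rightarrow> (nat \<Rightarrow> nat \<Rightarrow> nat \<Rightarrow> 'a)
    \<Rightarrow> nat \<Rightarrow> nat \<Rightarrow> nat \<Rightarrow> nat \<Rightarrow> 'a" where
  "Nodeval \<theta> u c y i a m = (\<Sum>g<u. \<theta> ^ (g * m) * c y (i * u + g) a)"

definition lin_det :: "'a::field \<Rightarrow> 'a \<Rightarrow> nat \<Rightarrow> nat \<Rightarrow> nat \<Rightarrow> nat \<Rightarrow> nat
    \<Rightarrow> nat \<Rightarrow> nat \<Rightarrow> nat set \<Rightarrow> nat set
    \<Rightarrow> ((nat \<Rightarrow> nat \<Rightarrow> nat \<Rightarrow> 'a) \<Rightarrow> 'a) \<Rightarrow> bool" where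
  "lin_det \<theta> \<xi> nb u s r L p ip R M q \<longleftrightarrow>
     (\<exists>coef :: nat \<Rightarrow> nat \<Rightarrow> nat \<Rightarrow> 'a. \<forall>c. is_codeword \<theta> \<xi> nb u s r L c \<longrightarrow>
        q c = (\<Sum>j\<in>R. \<Sum>a'<s ^ nb. \<Sum>m'\<in>M. coef j a' m' * Hval \<theta> u s L c p ip j a' m'))"

end

theory Submission
  imports Defs "HOL-Computational_Algebra.Polynomial"
begin


lemma poly_sum_zero:
  fixes Z V :: "nat \<Rightarrow> 'a::field"
  assumes "finite J" "degree P < N" "\<forall>w<N. (\<Sum>k\<in>J. Z k ^ w * V k) = 0"
  shows "(\<Sum>k\<in>J. poly P (Z k) * V k) = 0"
proof -
  have pe: "poly P x = (\<Sum>w<N. coeff P w * x ^ w)" for x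
  proof -
    have "poly P x = (\<Sum>w\<le>degree P. coeff P w * x ^ w)" by (rule poly_altdef)
    also have "\<dots> = (\<Sum>w<N. coeff P w * x ^ w)"
      apply (rule sum.mono_neutral_left)
      using assms(2) by (auto simp: coeff_eq_0)
    finally show ?thesis .
  qed
  have "(\<Sum>k\<in>J. poly P (Z k) * V k) = (\<Sum>k\<in>J. \<Sum>w<N. coeff P w * (Z k ^ w * V k))"
    by (simp add: pe sum_distrib_right mult.assoc)
  also have "\<dots> = (\<Sum>w<N. coeff P w * (\<Sum>k\<in>J. Z k ^ w * V k))"
    by (subst sum.swap) (simp add: sum_distrib_left)
  also have "\<dots> = 0" using assms(3) by simp
  finally show ?thesis .
qed

lemma solve:
  fixes Z :: "nat \<Rightarrow> 'a::field"
  assumes "finite J" "R \<subseteq> J" "t \<in> J - R" "inj_on Z J" "card (J - R) \<le> N"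
  shows "\<exists>coef. \<forall>V. (\<forall>w<N. (\<Sum>k\<in>J. Z k ^ w * V k) = 0) \<longrightarrow> V t = (\<Sum>k\<in>R. coef k * V k)"
proof -
  define S where "S = J - R - {t}"
  define P where "P = (\<Prod>k\<in>S. [:- Z k, 1:])"
  have fS: "finite S" using assms(1) by (simp add: S_def)
  have "degree P \<le> sum (degree \<circ> (\<lambda>k. [:- Z k, 1:])) S"
    unfolding P_def by (rule degree_prod_sum_le[OF fS])
  also have "\<dots> = card S" by simp
  also have "card S < card (J - R)" unfolding S_def using assms
    by (meson Diff_iff card_Diff1_less finite_Diff)
  finally have degP: "degree P < N" using assms(5) by linarith
  have polyP: "poly P x = (\<Prod>k\<in>S. x - Z k)" for x by (simp add: P_def poly_prod)
  have Pt: "poly P (Z t) \<noteq> 0"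
  proof -
    have "\<forall>k\<in>S. Z t - Z k \<noteq> 0" using assms(3,4) unfolding S_def
      by (auto dest: inj_onD)
    then show ?thesis using fS polyP by simp
  qed
  have Pz: "k \<in> S \<Longrightarrow> poly P (Z k) = 0" for k
    using fS polyP by (metis prod_zero_iff right_minus_eq)
  show ?thesis
  proof (rule exI[of _ "\<lambda>k. - poly P (Z k) / poly P (Z t)"], intro allI impI)
    fix V :: "nat \<Rightarrow> 'a" assume h: "\<forall>w<N. (\<Sum>k\<in>J. Z k ^ w * V k) = 0"
    have z: "(\<Sum>k\<in>J. poly P (Z k) * V k) = 0" by (rule poly_sum_zero[OF assms(1) degP h])
    have J: "J = R \<union> ({t} \<union> S)" using assms(2,3) by (auto simp: S_def)
    have "(\<Sum>k\<in>J. poly P (Z k) * V k) = (\<Sum>k\<in>R. poly P (Z k) * V k) + (\<Sum>k\<in>{t} \<union> S. poly P (Z k) * V k)"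
      unfolding J apply (rule sum.union_disjoint)
      using assms fS finite_subset by (auto simp: S_def)
    also have "(\<Sum>k\<in>{t} \<union> S. poly P (Z k) * V k) = poly P (Z t) * V t + (\<Sum>k\<in>S. poly P (Z k) * V k)"
      using fS by (subst sum.union_disjoint) (auto simp: S_def)
    also have "(\<Sum>k\<in>S. poly P (Z k) * V k) = 0" using Pz by simp
    finally have "(\<Sum>k\<in>R. poly P (Z k) * V k) + poly P (Z t) * V t = 0" using z by simp
    then have "V t = - (\<Sum>k\<in>R. poly P (Z k) * V k) / poly P (Z t)" using Pt
      by (simp add: field_simps add_eq_0_iff2) 
    then show "V t = (\<Sum>k\<in>R. - poly P (Z k) / poly P (Z t) * V k)"
      by (simp add: sum_divide_distrib sum_negf)
  qed
qed


lemma dig_div: "n \<le> k \<Longrightarrow> digit s x k = digit s (x div s ^ n) (k - n)"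
proof -
  assume "n \<le> k"
  then have "s ^ k = s ^ n * s ^ (k - n)" by (simp add: power_add[symmetric])
  then show ?thesis unfolding digit_def by (simp add: div_mult2_eq)
qed

lemma dig_mod: "0 < s \<Longrightarrow> k < n \<Longrightarrow> digit s x k = digit s (x mod s ^ n) k"
proof -
  assume "0 < s" "k < n"
  then have e: "s ^ n = s ^ k * s ^ (n - k)" by (simp add: power_add[symmetric])
  have "x mod s ^ n div s ^ k = x div s ^ k mod s ^ (n - k)"
    unfolding e mod_mult2_eq using \<open>0 < s\<close> by simp
  moreover have "s dvd s ^ (n - k)" using \<open>k < n\<close> by simp
  ultimately show ?thesis unfolding digit_def by (simp add: mod_mod_cancel)
qed

lemma decomp: "(a::nat) = a div s ^ Suc i * s ^ Suc i + digit s a i * s ^ i + a mod s ^ i"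
proof -
  have "a div s ^ Suc i = a div s ^ i div s" by (simp only: power_Suc2 div_mult2_eq)
  then have "a div s ^ i = a div s ^ Suc i * s + digit s a i" unfolding digit_def by simp
  then have "a div s ^ i * s ^ i = a div s ^ Suc i * s ^ Suc i + digit s a i * s ^ i"
    by (simp add: algebra_simps)
  then show ?thesis by (metis div_mult_mod_eq)
qed

lemma setdig_eq: "setdig s a i j = a div s ^ Suc i * s ^ Suc i + j * s ^ i + a mod s ^ i"
proof -
  have "setdig s a i j = a - digit s a i * s ^ i + j * s ^ i" by (simp add: setdig_def)
  also have "a - digit s a i * s ^ i = a div s ^ Suc i * s ^ Suc i + a mod s ^ i"
    by (subst (1) decomp[of a s i]) simp
  finally show ?thesis by simp
qed

lemma comp_parts:
  assumes "0 < s" "B < s ^ i" "j < s"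
  shows "(A * s ^ Suc i + j * s ^ i + B) div s ^ Suc i = A"
    and "(A * s ^ Suc i + j * s ^ i + B) mod s ^ i = B"
    and "digit s (A * s ^ Suc i + j * s ^ i + B) i = j"
proof -
  have x: "A * s ^ Suc i + j * s ^ i + B = (A * s + j) * s ^ i + B" by (simp add: algebra_simps)
  have d: "(A * s ^ Suc i + j * s ^ i + B) div s ^ i = A * s + j"
    unfolding x using assms by simp
  have m: "(A * s ^ Suc i + j * s ^ i + B) mod s ^ i = B"
    unfolding x using assms by simp
  show "(A * s ^ Suc i + j * s ^ i + B) div s ^ Suc i = A"
    using d assms by (simp only: power_Suc2 div_mult2_eq) simp
  show "(A * s ^ Suc i + j * s ^ i + B) mod s ^ i = B" by (rule m)
  show "digit s (A * s ^ Suc i + j * s ^ i + B) i = j"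
    unfolding digit_def d using assms by simp
qed

lemma digit_setdig_same: "0 < s \<Longrightarrow> j < s \<Longrightarrow> digit s (setdig s a i j) i = j"
  unfolding setdig_eq by (rule comp_parts(3)) simp_all

lemma digit_setdig_other:
  assumes "0 < s" "j < s" "k \<noteq> i"
  shows "digit s (setdig s a i j) k = digit s a k"
proof (cases "k < i")
  case True
  have "digit s (setdig s a i j) k = digit s (setdig s a i j mod s ^ i) k"
    using dig_mod[OF assms(1) True] .
  also have "setdig s a i j mod s ^ i = a mod s ^ i"
    unfolding setdig_eq using comp_parts(2) assms by simp
  also have "digit s (a mod s ^ i) k = digit s a k" using dig_mod[OF assms(1) True] by simp
  finally show ?thesis .
next
  case False
  then have le: "Suc i \<le> k" using assms(3) by simp
  have "digit s (setdig s a i j) k = digit s (setdig s a i j div s ^ Suc i) (k - Suc i)"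
    using dig_div[OF le] .
  also have "setdig s a i j div s ^ Suc i = a div s ^ Suc i"
    unfolding setdig_eq using comp_parts(1) assms by simp
  also have "digit s (a div s ^ Suc i) (k - Suc i) = digit s a k" using dig_div[OF le] by simp
  finally show ?thesis .
qed

lemma setdig_setdig: "0 < s \<Longrightarrow> j < s \<Longrightarrow> setdig s (setdig s a i j) i j' = setdig s a i j'"
  unfolding setdig_eq[of s "setdig s a i j"] using comp_parts(1,2)
  by (simp add: setdig_eq)

lemma setdig_digit: "setdig s a i (digit s a i) = a"
proof -
  have "digit s a i * s ^ i \<le> a" using decomp[of a s i] by linarith
  then show ?thesis by (simp add: setdig_def)
qed

lemma setdig_lt:
  assumes "0 < s" "a < s ^ n" "i < n" "j < s"
  shows "setdig s a i j < s ^ n"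
proof -
  define A where "A = a div s ^ Suc i"
  have "n = Suc i + (n - Suc i)" using assms(3) by simp
  then have e: "s ^ n = s ^ Suc i * s ^ (n - Suc i)" by (metis power_add)
  have A: "A < s ^ (n - Suc i)" unfolding A_def using assms(2) e
    by (metis div_less_iff_less_mult mult.commute zero_less_power assms(1))
  have "setdig s a i j < A * s ^ Suc i + j * s ^ i + s ^ i" unfolding setdig_eq A_def
    using assms(1) by simp
  also have "\<dots> \<le> A * s ^ Suc i + s ^ Suc i"
  proof -
    have "j * s ^ i + s ^ i = Suc j * s ^ i" by simp
    also have "\<dots> \<le> s * s ^ i" using assms(4) by (intro mult_right_mono) auto
    finally show ?thesis by simp
  qed
  also have "\<dots> = Suc A * s ^ Suc i" by simp
  also have "\<dots> \<le> s ^ (n - Suc i) * s ^ Suc i" using A by (intro mult_right_mono) auto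
  also have "\<dots> = s ^ n" using e by simp
  finally show ?thesis .
qed



lemma prim_nz:
  fixes \<xi> :: "'a::{field,finite}"
  assumes "primitive_elem \<xi>" "card (UNIV::'a set) > 2"
  shows "\<xi> \<noteq> 0"
proof
  assume z: "\<xi> = 0"
  have "UNIV \<subseteq> {0, 1::'a}"
  proof
    fix x :: 'a
    show "x \<in> {0, 1}"
    proof (cases "x = 0")
      case False
      then obtain k where "x = \<xi> ^ k" using assms(1) unfolding primitive_elem_def by blast
      then show ?thesis using z by (cases k) auto
    qed simp
  qed
  then have "card (UNIV::'a set) \<le> card {0, 1::'a}" by (intro card_mono) auto
  also have "\<dots> \<le> 2" by (simp add: card_insert_le_m1)
  finally show False using assms(2) by simp
qed

lemma prim_inj_lt:
  fixes \<xi> :: "'a::{field,finite}"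
  assumes "primitive_elem \<xi>" "card (UNIV::'a set) > 2"
    and "i < j" "j < card (UNIV::'a set) - 1" "\<xi> ^ i = \<xi> ^ j"
  shows False
proof -
  have nz: "\<xi> \<noteq> 0" by (rule prim_nz[OF assms(1,2)])
  define e where "e = j - i"
  have "\<xi> ^ j = \<xi> ^ i * \<xi> ^ e" unfolding e_def using assms(3)
    by (simp add: power_add[symmetric])
  then have e1: "\<xi> ^ e = 1" using assms(5) nz by simp
  have "UNIV - {0} \<subseteq> (\<lambda>k. \<xi> ^ k) ` {..<e}"
  proof
    fix x :: 'a assume "x \<in> UNIV - {0}"
    then obtain k where k: "x = \<xi> ^ k" using assms(1) unfolding primitive_elem_def by blast
    have "\<xi> ^ k = \<xi> ^ (k mod e) * (\<xi> ^ e) ^ (k div e)"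
      by (metis power_add power_mult mod_div_decomp add.commute mult.commute)
    then have "x = \<xi> ^ (k mod e)" using k e1 by simp
    moreover have "k mod e < e" using assms(3) unfolding e_def by simp
    ultimately show "x \<in> (\<lambda>k. \<xi> ^ k) ` {..<e}" by blast
  qed
  then have "card (UNIV - {0::'a}) \<le> card ((\<lambda>k. \<xi> ^ k) ` {..<e})" by (intro card_mono) auto
  also have "\<dots> \<le> e" using card_image_le[of "{..<e}"] by simp
  finally have "card (UNIV::'a set) - 1 \<le> e" by (simp add: card_Diff_singleton)
  then show False using assms(3,4) unfolding e_def by simp
qed

lemma prim_inj:
  fixes \<xi> :: "'a::{field,finite}"
  assumes "primitive_elem \<xi>" "card (UNIV::'a set) > 2"
    and "i < card (UNIV::'a set) - 1" "j < card (UNIV::'a set) - 1" "\<xi> ^ i = \<xi> ^ j"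
  shows "i = j"
  using prim_inj_lt[OF assms(1,2)] assms(3-5) by (metis linorder_neqE_nat)



definition ZZ :: "'a::field \<Rightarrow> nat \<Rightarrow> nat \<Rightarrow> nat \<Rightarrow> nat \<Rightarrow> nat \<Rightarrow> nat \<Rightarrow> 'a" where
  "ZZ \<xi> nb s ip a0 e k = (if k < nb then lam \<xi> s k (digit s a0 k) ^ e
      else lam \<xi> s ip ((digit s a0 ip + (k - nb)) mod s) ^ e)"

definition VV :: "'a::field \<Rightarrow> 'a \<Rightarrow> nat \<Rightarrow> nat \<Rightarrow> nat \<Rightarrow> nat \<Rightarrow> (nat \<Rightarrow> nat \<Rightarrow> nat \<Rightarrow> 'a)
   \<Rightarrow> nat \<Rightarrow> nat \<Rightarrow> nat \<Rightarrow> nat \<Rightarrow> nat \<Rightarrow> 'a" where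
  "VV \<theta> \<xi> nb u s L c p ip a0 m k = (if k < nb then lam \<xi> s k (digit s a0 k) ^ m * Hval \<theta> u s L c p ip k a0 m
     else lam \<xi> s ip ((digit s a0 ip + (k - nb)) mod s) ^ m *
       Nodeval \<theta> u c ((p + (k - nb)) mod L) ip (setdig s a0 ip ((digit s a0 ip + (k - nb)) mod s)) m)"

definition JJ :: "nat \<Rightarrow> nat \<Rightarrow> nat \<Rightarrow> nat set" where
  "JJ nb s ip = ({..<nb} - {ip}) \<union> (\<lambda>x. nb + x) ` {..<s}"

lemma eqn:
  fixes \<theta> \<xi> :: "'a::field"
  assumes cw: "is_codeword \<theta> \<xi> nb u s r L c" and th: "\<theta> ^ u = 1" and s0: "0 < s" and L0: "0 < L"
    and ip: "ip < nb" and a0: "a0 < s ^ nb" and t: "m + u * w < r"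
  shows "(\<Sum>k\<in>JJ nb s ip. ZZ \<xi> nb s ip a0 u k ^ w * VV \<theta> \<xi> nb u s L c p ip a0 m k) = 0"
proof -
  define I where "I = {..<nb} - {ip}"
  define ax where "ax x = setdig s a0 ip ((digit s a0 ip + x) mod s)" for x
  define yx where "yx x = (p + x) mod L" for x
  define lm where "lm i j = lam \<xi> s i j" for i j
  have axlt: "ax x < s ^ nb" for x unfolding ax_def using setdig_lt[OF s0 a0 ip] s0 by simp
  have dig_ax: "i \<in> I \<Longrightarrow> digit s (ax x) i = digit s a0 i" for i x
    unfolding ax_def I_def using digit_setdig_other s0 by simp
  have dig_ax2: "digit s (ax x) ip = (digit s a0 ip + x) mod s" for x
    unfolding ax_def using digit_setdig_same s0 by simp
  have thg: "\<theta> ^ (g * (m + u * w)) = \<theta> ^ (g * m)" for g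
  proof -
    have "\<theta> ^ (g * (m + u * w)) = \<theta> ^ (g * m) * (\<theta> ^ u) ^ (g * w)"
      by (simp add: power_add[symmetric] power_mult[symmetric] algebra_simps)
    then show ?thesis using th by simp
  qed
  have lpow: "(z::'a) ^ (m + u * w) = (z ^ u) ^ w * z ^ m" for z
    by (simp add: power_add power_mult)
  have E: "(\<Sum>i<nb. (lm i (digit s (ax x) i) ^ u) ^ w * lm i (digit s (ax x) i) ^ m *
             Nodeval \<theta> u c (yx x) i (ax x) m) = 0" for x
  proof -
    have "yx x < L" unfolding yx_def using L0 by simp
    then have "(\<Sum>i<nb. \<Sum>g<u. \<theta> ^ (g * (m + u * w)) * (lam \<xi> s i (digit s (ax x) i)) ^ (m + u * w)
              * c (yx x) (i * u + g) (ax x)) = 0"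
      using cw t axlt unfolding is_codeword_def by blast
    then show ?thesis unfolding Nodeval_def lm_def thg lpow
      by (simp add: sum_distrib_left mult_ac)
  qed
  have split: "(\<Sum>i<nb. f i) = (\<Sum>i\<in>I. f i) + f ip" for f :: "nat \<Rightarrow> 'a"
    unfolding I_def using sum.remove[of "{..<nb}" ip f] ip by (simp add: add.commute)
  have E2: "(\<Sum>i\<in>I. (lm i (digit s a0 i) ^ u) ^ w * lm i (digit s a0 i) ^ m *
             Nodeval \<theta> u c (yx x) i (ax x) m)
        + (lm ip ((digit s a0 ip + x) mod s) ^ u) ^ w * lm ip ((digit s a0 ip + x) mod s) ^ m *
             Nodeval \<theta> u c (yx x) ip (ax x) m = 0" for x
    using E[of x] unfolding split by (simp add: dig_ax dig_ax2 cong: sum.cong)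
  have Hv: "(\<Sum>x<s. Nodeval \<theta> u c (yx x) i (ax x) m) = Hval \<theta> u s L c p ip i a0 m" for i
    unfolding Nodeval_def Hval_def yx_def ax_def by simp
  have "0 = (\<Sum>x<s. (\<Sum>i\<in>I. (lm i (digit s a0 i) ^ u) ^ w * lm i (digit s a0 i) ^ m *
             Nodeval \<theta> u c (yx x) i (ax x) m)
        + (lm ip ((digit s a0 ip + x) mod s) ^ u) ^ w * lm ip ((digit s a0 ip + x) mod s) ^ m *
             Nodeval \<theta> u c (yx x) ip (ax x) m)" using E2 by simp
  also have "\<dots> = (\<Sum>i\<in>I. (lm i (digit s a0 i) ^ u) ^ w * lm i (digit s a0 i) ^ m *
             Hval \<theta> u s L c p ip i a0 m)
        + (\<Sum>x<s. (lm ip ((digit s a0 ip + x) mod s) ^ u) ^ w * lm ip ((digit s a0 ip + x) mod s) ^ m *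
             Nodeval \<theta> u c (yx x) ip (ax x) m)"
    by (simp add: sum.distrib Hv[symmetric] sum_distrib_left) (rule sum.swap)
  also have "(\<Sum>i\<in>I. (lm i (digit s a0 i) ^ u) ^ w * lm i (digit s a0 i) ^ m *
             Hval \<theta> u s L c p ip i a0 m) = (\<Sum>k\<in>I. ZZ \<xi> nb s ip a0 u k ^ w * VV \<theta> \<xi> nb u s L c p ip a0 m k)"
    unfolding ZZ_def VV_def lm_def I_def by (intro sum.cong) (auto simp: mult_ac)
  also have "(\<Sum>x<s. (lm ip ((digit s a0 ip + x) mod s) ^ u) ^ w * lm ip ((digit s a0 ip + x) mod s) ^ m *
             Nodeval \<theta> u c (yx x) ip (ax x) m) = (\<Sum>k\<in>(\<lambda>x. nb + x) ` {..<s}. ZZ \<xi> nb s ip a0 u k ^ w * VV \<theta> \<xi> nb u s L c p ip a0 m k)"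
    by (subst sum.reindex) (auto simp: ZZ_def VV_def lm_def ax_def yx_def mult_ac)
  also have "(\<Sum>k\<in>I. ZZ \<xi> nb s ip a0 u k ^ w * VV \<theta> \<xi> nb u s L c p ip a0 m k) +
       (\<Sum>k\<in>(\<lambda>x. nb + x) ` {..<s}. ZZ \<xi> nb s ip a0 u k ^ w * VV \<theta> \<xi> nb u s L c p ip a0 m k)
     = (\<Sum>k\<in>JJ nb s ip. ZZ \<xi> nb s ip a0 u k ^ w * VV \<theta> \<xi> nb u s L c p ip a0 m k)"
    unfolding JJ_def I_def by (rule sum.union_disjoint[symmetric]) auto
  finally show ?thesis by simp
qed



lemma modinj: "(x::nat) < s \<Longrightarrow> x' < s \<Longrightarrow> (d + x) mod s = (d + x') mod s \<Longrightarrow> x = x'"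
proof -
  have *: "x \<le> x' \<Longrightarrow> x' < s \<Longrightarrow> (d + x) mod s = (d + x') mod s \<Longrightarrow> x = x'" for x x'
  proof -
    assume a: "x \<le> x'" "x' < s" "(d + x) mod s = (d + x') mod s"
    then have "s dvd (d + x') - (d + x)" using mod_eq_dvd_iff_nat[of "d + x" "d + x'" s] by simp
    then have "s dvd x' - x" by simp
    moreover have "x' - x < s" using a by simp
    ultimately have "x' - x = 0" using dvd_imp_le by (metis not_less zero_less_iff_neq_zero)
    then show ?thesis using a by simp
  qed
  assume "x < s" "x' < s" "(d + x) mod s = (d + x') mod s"
  then show ?thesis using *[of x x'] *[of x' x] by (metis nat_le_linear)
qed

lemma divmod_eq: "(j::nat) < s \<Longrightarrow> j' < s \<Longrightarrow> i * s + j = i' * s + j' \<Longrightarrow> i = i' \<and> j = j'"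
proof -
  assume a: "j < s" "j' < s" "i * s + j = i' * s + j'"
  have "(i * s + j) div s = i" "(i' * s + j') div s = i'" "(i * s + j) mod s = j" "(i' * s + j') mod s = j'"
    using a(1,2) by simp_all
  then show ?thesis using a(3) by metis
qed

lemma Zinj:
  fixes \<xi> :: "'a::{field,finite}"
  assumes prim: "primitive_elem \<xi>" and c2: "card (UNIV::'a set) > 2"
    and cq: "card (UNIV::'a set) \<ge> nb * u * s + 1" and u0: "0 < u" and s0: "0 < s" and ip: "ip < nb"
  shows "inj_on (ZZ \<xi> nb s ip a0 u) (JJ nb s ip)"
proof -
  define pos where "pos k = (if k < nb then k else ip)" for k
  define dg where "dg k = (if k < nb then digit s a0 k else (digit s a0 ip + (k - nb)) mod s)" for k
  have Zk: "ZZ \<xi> nb s ip a0 u k = \<xi> ^ ((pos k * s + dg k) * u)" for k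
    unfolding ZZ_def lam_def pos_def dg_def by (simp add: power_mult)
  have dgs: "dg k < s" for k unfolding dg_def digit_def using s0 by simp
  have posl: "k \<in> JJ nb s ip \<Longrightarrow> pos k < nb" for k unfolding pos_def JJ_def using ip by auto
  have bound: "k \<in> JJ nb s ip \<Longrightarrow> (pos k * s + dg k) * u < card (UNIV::'a set) - 1" for k
  proof -
    assume k: "k \<in> JJ nb s ip"
    have "pos k * s + dg k < pos k * s + s" using dgs[of k] by simp
    also have "\<dots> = Suc (pos k) * s" by simp
    also have "\<dots> \<le> nb * s" using posl[OF k] by (intro mult_right_mono) auto
    finally have "(pos k * s + dg k) * u < nb * s * u" using u0 by simp
    moreover have "nb * s * u = nb * u * s" by simp
    ultimately show ?thesis using cq by linarith
  qed
  show ?thesis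
  proof (rule inj_onI)
    fix k k' assume k: "k \<in> JJ nb s ip" and k': "k' \<in> JJ nb s ip"
      and e: "ZZ \<xi> nb s ip a0 u k = ZZ \<xi> nb s ip a0 u k'"
    have "(pos k * s + dg k) * u = (pos k' * s + dg k') * u"
      using prim_inj[OF prim c2 bound[OF k] bound[OF k']] e unfolding Zk by simp
    then have "pos k * s + dg k = pos k' * s + dg k'" using u0 by simp
    then have pd: "pos k = pos k'" "dg k = dg k'" using divmod_eq[OF dgs dgs] by auto
    show "k = k'"
    proof (cases "k < nb")
      case True
      show ?thesis
      proof (cases "k' < nb")
        case True
        then show ?thesis using pd \<open>k < nb\<close> unfolding pos_def by simp
      next
        case False
        then have "pos k = ip" using pd unfolding pos_def by simp
        then show ?thesis using True k unfolding pos_def JJ_def by auto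
      qed
    next
      case False
      show ?thesis
      proof (cases "k' < nb")
        case True
        then have "pos k' = ip" using pd False unfolding pos_def by simp
        then show ?thesis using True k' unfolding pos_def JJ_def by auto
      next
        case False2: False
        obtain x where x: "x < s" "k = nb + x" using k False unfolding JJ_def by auto
        obtain x' where x': "x' < s" "k' = nb + x'" using k' False2 unfolding JJ_def by auto
        have "(digit s a0 ip + x) mod s = (digit s a0 ip + x') mod s"
          using pd(2) x x' unfolding dg_def by simp
        then show ?thesis using modinj x x' by simp
      qed
    qed
  qed
qed

lemma cardJ: "ip < nb \<Longrightarrow> card (JJ nb s ip) = nb - 1 + s"
proof -
  assume ip: "ip < nb"
  have "card (JJ nb s ip) = card ({..<nb} - {ip}) + card ((\<lambda>x. nb + x) ` {..<s})"
    unfolding JJ_def by (rule card_Un_disjoint) auto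
  also have "card ((\<lambda>x. nb + x) ` {..<s}) = s" by (subst card_image) (auto simp: inj_on_def)
  also have "card ({..<nb} - {ip}) = nb - 1" using ip by simp
  finally show ?thesis .
qed

lemma lin_det_intro:
  assumes "a0 < s ^ nb" "m \<in> M" "finite M"
    and "\<forall>c. is_codeword \<theta> \<xi> nb u s r L c \<longrightarrow> q c = (\<Sum>j\<in>R. K j * Hval \<theta> u s L c p ip j a0 m)"
  shows "lin_det \<theta> \<xi> nb u s r L p ip R M q"
  unfolding lin_det_def
proof (rule exI[of _ "\<lambda>j a' m'. if a' = a0 \<and> m' = m then K j else 0"], intro allI impI)
  fix c assume cw: "is_codeword \<theta> \<xi> nb u s r L c"
  have inner: "(\<Sum>m'\<in>M. (if a' = a0 \<and> m' = m then K j else 0) * Hval \<theta> u s L c p ip j a' m')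
        = (if a' = a0 then K j * Hval \<theta> u s L c p ip j a0 m else 0)" for j a'
  proof -
    have "(\<Sum>m'\<in>M. (if a' = a0 \<and> m' = m then K j else 0) * Hval \<theta> u s L c p ip j a' m')
       = (\<Sum>m'\<in>M. if m' = m then (if a' = a0 then K j * Hval \<theta> u s L c p ip j a0 m else 0) else 0)"
      by (rule sum.cong) auto
    also have "\<dots> = (if a' = a0 then K j * Hval \<theta> u s L c p ip j a0 m else 0)"
      using assms(2,3) by simp
    finally show ?thesis .
  qed
  show "q c = (\<Sum>j\<in>R. \<Sum>a'<s ^ nb. \<Sum>m'\<in>M. (if a' = a0 \<and> m' = m then K j else 0) * Hval \<theta> u s L c p ip j a' m')"
    unfolding inner using assms(1) assms(4) cw by simp
qed



lemma core:
  fixes \<theta> \<xi> :: "'a::{field,finite}"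
  assumes prim: "primitive_elem \<xi>" and c2: "card (UNIV::'a set) > 2"
    and cq: "card (UNIV::'a set) \<ge> nb * u * s + 1" and u0: "0 < u" and s0: "0 < s" and L0: "0 < L"
    and ip: "ip < nb" and th: "\<theta> ^ u = 1" and a0: "a0 < s ^ nb"
    and R: "R \<subseteq> {..<nb} - {ip}" and t: "t \<in> JJ nb s ip - R" and cJ: "card (JJ nb s ip - R) \<le> N"
    and w: "\<forall>w<N. m + u * w < r" and M: "finite M" "m \<in> M"
    and tgt: "\<forall>c. VV \<theta> \<xi> nb u s L c p ip a0 m t = lT ^ m * q c" and lT: "lT \<noteq> 0"
  shows "lin_det \<theta> \<xi> nb u s r L p ip R M q"
proof -
  have fJ: "finite (JJ nb s ip)" unfolding JJ_def by simp
  have RJ: "R \<subseteq> JJ nb s ip" using R unfolding JJ_def by auto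
  obtain coef where coef: "\<forall>V. (\<forall>w<N. (\<Sum>k\<in>JJ nb s ip. ZZ \<xi> nb s ip a0 u k ^ w * V k) = 0)
       \<longrightarrow> V t = (\<Sum>k\<in>R. coef k * V k)"
    using solve[OF fJ RJ t Zinj[OF prim c2 cq u0 s0 ip] cJ] by blast
  show ?thesis
  proof (rule lin_det_intro[OF a0 M(2) M(1)], intro allI impI)
    fix c assume cw: "is_codeword \<theta> \<xi> nb u s r L c"
    have "\<forall>w<N. (\<Sum>k\<in>JJ nb s ip. ZZ \<xi> nb s ip a0 u k ^ w * VV \<theta> \<xi> nb u s L c p ip a0 m k) = 0"
      using eqn[OF cw th s0 L0 ip a0] w by blast
    then have "VV \<theta> \<xi> nb u s L c p ip a0 m t = (\<Sum>k\<in>R. coef k * VV \<theta> \<xi> nb u s L c p ip a0 m k)"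
      using coef by blast
    also have "\<dots> = (\<Sum>k\<in>R. coef k * lam \<xi> s k (digit s a0 k) ^ m * Hval \<theta> u s L c p ip k a0 m)"
      using R by (intro sum.cong) (auto simp: VV_def)
    finally have "lT ^ m * q c = (\<Sum>k\<in>R. coef k * lam \<xi> s k (digit s a0 k) ^ m * Hval \<theta> u s L c p ip k a0 m)"
      using tgt by simp
    then have "q c = (\<Sum>k\<in>R. coef k * lam \<xi> s k (digit s a0 k) ^ m * Hval \<theta> u s L c p ip k a0 m) / lT ^ m"
      using lT by (simp add: field_simps)
    then show "q c = (\<Sum>k\<in>R. (coef k * lam \<xi> s k (digit s a0 k) ^ m / lT ^ m) * Hval \<theta> u s L c p ip k a0 m)"
      by (simp add: sum_divide_distrib)
  qed
qed

lemma main_case: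
  fixes \<theta> \<xi> :: "'a::{field,finite}"
  assumes prim: "primitive_elem \<xi>" and c2: "card (UNIV::'a set) > 2"
    and cq: "card (UNIV::'a set) \<ge> nb * u * s + 1" and u0: "0 < u" and s0: "0 < s" and L0: "0 < L"
    and ip: "ip < nb" and th: "\<theta> ^ u = 1" and ipF: "ip \<in> F" and F: "F \<subseteq> {..<nb}"
    and R: "R \<subseteq> {..<nb} - F" and cJ: "nb - 1 + s - card R \<le> N"
    and w: "\<forall>w<N. m + u * w < r" and M: "finite M" "m \<in> M"
    and a: "a < s ^ nb"
  shows "(\<forall>x < s. lin_det \<theta> \<xi> nb u s r L p ip R M
             (\<lambda>c. Nodeval \<theta> u c ((p + x) mod L) ip a m)) \<and>
         (\<forall>i \<in> F - {ip}. lin_det \<theta> \<xi> nb u s r L p ip R M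
             (\<lambda>c. Hval \<theta> u s L c p ip i a m))"
proof -
  have nz: "\<xi> \<noteq> 0" by (rule prim_nz[OF prim c2])
  have R': "R \<subseteq> {..<nb} - {ip}" using R ipF by auto
  have fR: "finite R" using R by (meson finite_Diff finite_lessThan finite_subset)
  have cJ': "card (JJ nb s ip - R) \<le> N"
  proof -
    have "R \<subseteq> JJ nb s ip" using R' unfolding JJ_def by auto
    then have "card (JJ nb s ip - R) = card (JJ nb s ip) - card R" using fR by (simp add: card_Diff_subset)
    then show ?thesis using cardJ[OF ip] cJ by simp
  qed
  show ?thesis
  proof (intro conjI allI impI ballI)
    fix x assume x: "x < s"
    define a0 where "a0 = setdig s a ip ((digit s a ip + (s - x)) mod s)"
    have a0lt: "a0 < s ^ nb" unfolding a0_def using setdig_lt[OF s0 a ip] s0 by simp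
    have da: "digit s a ip < s" unfolding digit_def using s0 by simp
    have dga0: "(digit s a0 ip + x) mod s = digit s a ip"
    proof -
      have "digit s a0 ip = (digit s a ip + (s - x)) mod s"
        unfolding a0_def using digit_setdig_same s0 by simp
      then have "(digit s a0 ip + x) mod s = (digit s a ip + (s - x) + x) mod s"
        by (simp add: mod_add_left_eq)
      also have "digit s a ip + (s - x) + x = digit s a ip + s" using x by simp
      finally show ?thesis using da by simp
    qed
    have sa: "setdig s a0 ip (digit s a ip) = a"
      unfolding a0_def using setdig_setdig s0 setdig_digit by simp
    show "lin_det \<theta> \<xi> nb u s r L p ip R M (\<lambda>c. Nodeval \<theta> u c ((p + x) mod L) ip a m)"
    proof (rule core[OF prim c2 cq u0 s0 L0 ip th a0lt R' _ cJ' w M, of "nb + x" _ "lam \<xi> s ip (digit s a ip)"])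
      show "nb + x \<in> JJ nb s ip - R" using x R unfolding JJ_def by auto
      show "\<forall>c. VV \<theta> \<xi> nb u s L c p ip a0 m (nb + x) = lam \<xi> s ip (digit s a ip) ^ m * Nodeval \<theta> u c ((p + x) mod L) ip a m"
        unfolding VV_def using dga0 sa by simp
      show "lam \<xi> s ip (digit s a ip) \<noteq> 0" unfolding lam_def using nz by simp
    qed
  next
    fix i assume i: "i \<in> F - {ip}"
    show "lin_det \<theta> \<xi> nb u s r L p ip R M (\<lambda>c. Hval \<theta> u s L c p ip i a m)"
    proof (rule core[OF prim c2 cq u0 s0 L0 ip th a R' _ cJ' w M, of i _ "lam \<xi> s i (digit s a i)"])
      show "i \<in> JJ nb s ip - R" using i R F unfolding JJ_def by auto
      show "\<forall>c. VV \<theta> \<xi> nb u s L c p ip a m i = lam \<xi> s i (digit s a i) ^ m * Hval \<theta> u s L c p ip i a m"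
        unfolding VV_def using i F by auto
      show "lam \<xi> s i (digit s a i) \<noteq> 0" unfolding lam_def using nz by simp
    qed
  qed
qed



lemma ar1:
  assumes "(m::nat) < u - v" "v < u" "w < nb - kb"
  shows "m + u * w < nb * u - (kb * u + v)"
proof -
  have "u * (w + 1) \<le> u * (nb - kb)" using assms(3) by (intro mult_le_mono2) simp
  then have "u * w + u \<le> nb * u - kb * u" by (simp add: diff_mult_distrib2 mult.commute)
  then show ?thesis using assms(1,2) by linarith
qed

lemma ar2:
  assumes "(m::nat) < u" "v < u" "w < nb - kb - 1"
  shows "m + u * w < nb * u - (kb * u + v)"
proof -
  have "u * (w + 2) \<le> u * (nb - kb)" using assms(3) by (intro mult_le_mono2) simp
  then have "u * w + 2 * u \<le> nb * u - kb * u" by (simp add: diff_mult_distrib2 mult.commute algebra_simps)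
  then show ?thesis using assms(1,2) by linarith
qed

theorem lemma1:
  fixes \<theta> \<xi> :: "'a::{field,finite}"
    and nb u kb v db hb \<delta> p :: nat
    and ifam :: "nat \<Rightarrow> nat"
  assumes "nb \<ge> 2" and "u \<ge> 2" and "v < u"
    and "1 \<le> \<delta>" and "\<delta> < hb"
    and "kb \<le> db" and "db \<le> nb - hb" and "hb \<le> nb"
    and "card (UNIV :: 'a set) \<ge> nb * u * (db - kb + 1) + 1"
    and "has_mult_order \<theta> u"
    and "primitive_elem \<xi>"
    and "inj_on ifam {..<hb}" and "ifam ` {..<hb} \<subseteq> {..<nb}"
    and "p < hb"
  shows
   "(\<forall>b R. 1 \<le> b \<and> b \<le> u - v \<and> R \<subseteq> {..<nb} - ifam ` {..<hb} \<and> card R = db \<longrightarrow>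
      (\<forall>a < (db - kb + 1) ^ nb. \<forall>m < b.
        (\<forall>x < db - kb + 1.
           lin_det \<theta> \<xi> nb u (db - kb + 1) (nb * u - (kb * u + v)) (db - kb + 1 + hb - \<delta>)
             p (ifam p) R {..<b}
             (\<lambda>c. Nodeval \<theta> u c ((p + x) mod (db - kb + 1 + hb - \<delta>)) (ifam p) a m)) \<and>
        (\<forall>i \<in> ifam ` {..<hb} - {ifam p}.
           lin_det \<theta> \<xi> nb u (db - kb + 1) (nb * u - (kb * u + v)) (db - kb + 1 + hb - \<delta>)
             p (ifam p) R {..<b}
             (\<lambda>c. Hval \<theta> u (db - kb + 1) (db - kb + 1 + hb - \<delta>) c p (ifam p) i a m)))) \<and>
    (\<forall>b R'. u - v + 1 \<le> b \<and> b \<le> u \<and> R' \<subseteq> {..<nb} - ifam ` {..<hb} \<and> card R' = db + 1 \<longrightarrow>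
      (\<forall>a < (db - kb + 1) ^ nb. \<forall>m \<in> {u - v..<b}.
        (\<forall>x < db - kb + 1.
           lin_det \<theta> \<xi> nb u (db - kb + 1) (nb * u - (kb * u + v)) (db - kb + 1 + hb - \<delta>)
             p (ifam p) R' {u - v..<b}
             (\<lambda>c. Nodeval \<theta> u c ((p + x) mod (db - kb + 1 + hb - \<delta>)) (ifam p) a m)) \<and>
        (\<forall>i \<in> ifam ` {..<hb} - {ifam p}.
           lin_det \<theta> \<xi> nb u (db - kb + 1) (nb * u - (kb * u + v)) (db - kb + 1 + hb - \<delta>)
             p (ifam p) R' {u - v..<b}
             (\<lambda>c. Hval \<theta> u (db - kb + 1) (db - kb + 1 + hb - \<delta>) c p (ifam p) i a m))))"
proof -
  note as = assms
  have u0: "0 < u" using as(2) by simp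
  have s0: "0 < db - kb + 1" by simp
  have L0: "0 < db - kb + 1 + hb - \<delta>" using as(5) by simp
  have th: "\<theta> ^ u = 1" using as(10) unfolding has_mult_order_def by simp
  have "4 \<le> nb * u" using as(1,2) mult_le_mono[of 2 nb 2 u] by simp
  then have "4 \<le> nb * u * (db - kb + 1)" using mult_le_mono[of 4 "nb * u" 1 "db - kb + 1"] by simp
  then have c2: "card (UNIV::'a set) > 2" using as(9) by linarith
  have ipF: "ifam p \<in> ifam ` {..<hb}" using as(14) by simp
  have ip: "ifam p < nb" using ipF as(13) by auto
  show ?thesis
  proof (rule conjI)
    show "\<forall>b R. 1 \<le> b \<and> b \<le> u - v \<and> R \<subseteq> {..<nb} - ifam ` {..<hb} \<and> card R = db \<longrightarrow>
      (\<forall>a < (db - kb + 1) ^ nb. \<forall>m < b.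
        (\<forall>x < db - kb + 1.
           lin_det \<theta> \<xi> nb u (db - kb + 1) (nb * u - (kb * u + v)) (db - kb + 1 + hb - \<delta>)
             p (ifam p) R {..<b}
             (\<lambda>c. Nodeval \<theta> u c ((p + x) mod (db - kb + 1 + hb - \<delta>)) (ifam p) a m)) \<and>
        (\<forall>i \<in> ifam ` {..<hb} - {ifam p}.
           lin_det \<theta> \<xi> nb u (db - kb + 1) (nb * u - (kb * u + v)) (db - kb + 1 + hb - \<delta>)
             p (ifam p) R {..<b}
             (\<lambda>c. Hval \<theta> u (db - kb + 1) (db - kb + 1 + hb - \<delta>) c p (ifam p) i a m)))"
    proof (intro allI impI)
    fix b R a m
    assume h: "1 \<le> b \<and> b \<le> u - v \<and> R \<subseteq> {..<nb} - ifam ` {..<hb} \<and> card R = db"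
      and a: "a < (db - kb + 1) ^ nb" and m: "m < b"
    have w: "\<forall>w<nb - kb. m + u * w < nb * u - (kb * u + v)"
      using ar1[of m u v] h m as(3) by auto
    have cJ: "nb - 1 + (db - kb + 1) - card R \<le> nb - kb" using h as(1,6) by simp
    note mc = main_case[OF as(11) c2 as(9) u0 s0 L0 ip th ipF as(13) conjunct1[OF conjunct2[OF conjunct2[OF h]]] cJ w
        finite_lessThan[of b] _ a, of p] 
    show "(\<forall>x < db - kb + 1.
           lin_det \<theta> \<xi> nb u (db - kb + 1) (nb * u - (kb * u + v)) (db - kb + 1 + hb - \<delta>)
             p (ifam p) R {..<b}
             (\<lambda>c. Nodeval \<theta> u c ((p + x) mod (db - kb + 1 + hb - \<delta>)) (ifam p) a m)) \<and>
        (\<forall>i \<in> ifam ` {..<hb} - {ifam p}.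
           lin_det \<theta> \<xi> nb u (db - kb + 1) (nb * u - (kb * u + v)) (db - kb + 1 + hb - \<delta>)
             p (ifam p) R {..<b}
             (\<lambda>c. Hval \<theta> u (db - kb + 1) (db - kb + 1 + hb - \<delta>) c p (ifam p) i a m))"
      using mc m by simp
    qed
  next
    show "\<forall>b R'. u - v + 1 \<le> b \<and> b \<le> u \<and> R' \<subseteq> {..<nb} - ifam ` {..<hb} \<and> card R' = db + 1 \<longrightarrow>
      (\<forall>a < (db - kb + 1) ^ nb. \<forall>m \<in> {u - v..<b}.
        (\<forall>x < db - kb + 1.
           lin_det \<theta> \<xi> nb u (db - kb + 1) (nb * u - (kb * u + v)) (db - kb + 1 + hb - \<delta>)
             p (ifam p) R' {u - v..<b}
             (\<lambda>c. Nodeval \<theta> u c ((p + x) mod (db - kb + 1 + hb - \<delta>)) (ifam p) a m)) \<and>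
        (\<forall>i \<in> ifam ` {..<hb} - {ifam p}.
           lin_det \<theta> \<xi> nb u (db - kb + 1) (nb * u - (kb * u + v)) (db - kb + 1 + hb - \<delta>)
             p (ifam p) R' {u - v..<b}
             (\<lambda>c. Hval \<theta> u (db - kb + 1) (db - kb + 1 + hb - \<delta>) c p (ifam p) i a m)))"
    proof (intro allI impI ballI)
    fix b R a m
    assume h: "u - v + 1 \<le> b \<and> b \<le> u \<and> R \<subseteq> {..<nb} - ifam ` {..<hb} \<and> card R = db + 1"
      and a: "a < (db - kb + 1) ^ nb" and m: "m \<in> {u - v..<b}"
    have w: "\<forall>w<nb - kb - 1. m + u * w < nb * u - (kb * u + v)"
      using ar2[of m u v] h m as(3) by auto
    have cJ: "nb - 1 + (db - kb + 1) - card R \<le> nb - kb - 1" using h as(1,6) by simp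
    note mc = main_case[OF as(11) c2 as(9) u0 s0 L0 ip th ipF as(13) conjunct1[OF conjunct2[OF conjunct2[OF h]]] cJ w
        finite_atLeastLessThan[of "u - v" b] m a, of p] 
    show "(\<forall>x < db - kb + 1.
           lin_det \<theta> \<xi> nb u (db - kb + 1) (nb * u - (kb * u + v)) (db - kb + 1 + hb - \<delta>)
             p (ifam p) R {u - v..<b}
             (\<lambda>c. Nodeval \<theta> u c ((p + x) mod (db - kb + 1 + hb - \<delta>)) (ifam p) a m)) \<and>
        (\<forall>i \<in> ifam ` {..<hb} - {ifam p}.
           lin_det \<theta> \<xi> nb u (db - kb + 1) (nb * u - (kb * u + v)) (db - kb + 1 + hb - \<delta>)
             p (ifam p) R {u - v..<b}
             (\<lambda>c. Hval \<theta> u (db - kb + 1) (db - kb + 1 + hb - \<delta>) c p (ifam p) i a m))"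
      using mc by simp
    qed
  qed
qed

end
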